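(* For every $n\ge 2$, $N(n)$ is even.
   Context: A semi-Heyting algebra is an algebra $\langle L,\vee,\wedge,\to,0,1\rangle$ such that: (SH1) $\langle L,\vee,\wedge,0,1\rangle$ is a bounded lattice with least element $0$ and greatest element $1$; (SH2) $x\wedge(x\to y)=x\wedge y$; (SH3) $x\wedge(y\to z)=x\wedge[(x\wedge y)\to(x\wedge z)]$; (SH4) $x\to x=1$, for all $x,y,z\in L$. For $n\ge 1$, $C_n$ denotes the chain $a_0<a_1<\cdots<a_{n-1}$ with $0=a_0$, $1=a_{n-1}$ (for $n=1$, $0=1$), with $\wedge=\min$, $\vee=\max$. $N(n)$ denotes the number of binary operations $\to$ on $C_n$ such that $\langle C_n,\vee,\wedge,\to,0,1\rangle$ is a semi-Heyting algebra. *)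

theory Defs
  imports Main
begin

text \<open>The chain C_n is modelled by the carrier {0..<n} of naturals, with a_i = i,
  meet = min, join = max, 0 = 0, 1 = n - 1.  A binary operation on C_n is a function
  nat => nat => nat mapping {0..<n} x {0..<n} into {0..<n}; to count operations
  (rather than their arbitrary extensions outside the carrier) we require the
  function to be 0 outside the carrier.\<close>

definition is_chain_op :: "nat \<Rightarrow> (nat \<Rightarrow> nat \<Rightarrow> nat) \<Rightarrow> bool" where
  "is_chain_op n imp \<longleftrightarrow>
     (\<forall>x y. x < n \<and> y < n \<longrightarrow> imp x y < n) \<and>
     (\<forall>x y. \<not> (x < n \<and> y < n) \<longrightarrow> imp x y = 0)"

text \<open>(SH1) holds automatically for the chain (min/max bounded lattice).\<close>
definition semi_heyting_chain :: "nat \<Rightarrow> (nat \<Rightarrow> nat \<Rightarrow> nat) \<Rightarrow> bool" where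
  "semi_heyting_chain n imp \<longleftrightarrow>
     (\<forall>x y. x < n \<and> y < n \<longrightarrow> min x (imp x y) = min x y) \<and>
     (\<forall>x y z. x < n \<and> y < n \<and> z < n \<longrightarrow>
         min x (imp y z) = min x (imp (min x y) (min x z))) \<and>
     (\<forall>x. x < n \<longrightarrow> imp x x = n - 1)"

definition N :: "nat \<Rightarrow> nat" where
  "N n = card {imp. is_chain_op n imp \<and> semi_heyting_chain n imp}"

end

theory Submission
  imports Defs
begin
lemma even_card_invol:
  "finite A \<Longrightarrow> (\<forall>x\<in>A. g x \<in> A \<and> g x \<noteq> x \<and> g (g x) = x) \<Longrightarrow> even (card A)"
proof (induction "card A" arbitrary: A rule: less_induct)
  case less
  show ?case
  proof (cases "A = {}")
    case True then show ?thesis by simp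
  next
    case False
    then obtain x where x: "x \<in> A" by blast
    let ?B = "A - {x, g x}"
    have gx: "g x \<in> A" "g x \<noteq> x" "g (g x) = x" using less.prems x by auto
    have sub: "{x, g x} \<subseteq> A" using x gx by auto
    have c2: "card {x, g x} = 2" using gx by simp
    have cB: "card ?B = card A - 2"
      using card_Diff_subset[OF _ sub] less.prems(1) c2 by simp
    have "card {x, g x} \<le> card A" using sub by (intro card_mono less.prems(1))
    then have cA: "card A = card ?B + 2" using cB c2 by simp
    have inv: "\<forall>y\<in>?B. g y \<in> ?B \<and> g y \<noteq> y \<and> g (g y) = y"
    proof
      fix y assume y: "y \<in> ?B"
      then have yA: "y \<in> A" "y \<noteq> x" "y \<noteq> g x" by auto
      have p: "g y \<in> A" "g y \<noteq> y" "g (g y) = y" using less.prems(2) yA(1) by auto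
      have "g y \<noteq> x" using p(3) yA(3) by auto
      moreover have "g y \<noteq> g x" using p(3) gx(3) yA(2) by metis
      ultimately show "g y \<in> ?B \<and> g y \<noteq> y \<and> g (g y) = y" using p by auto
    qed
    have lt: "card ?B < card A" using cA by simp
    have fB: "finite ?B" using less.prems(1) by simp
    have "even (card ?B)" using less.hyps[OF lt fB inv] .
    then show ?thesis using cA by simp
  qed
qed
theorem mainTheorem4:
  fixes n :: nat
  assumes "n \<ge> 2"
  shows "even (N n)"
proof -
  let ?S = "{imp. is_chain_op n imp \<and> semi_heyting_chain n imp}"
  define a where "a = n - 2"
  define t where "t = n - 1"
  have nt: "n = Suc t" using assms unfolding t_def by auto
  have at: "a < t" "t < n" "Suc a = t" using assms unfolding a_def t_def by auto
  define g where "g = (\<lambda>imp :: nat \<Rightarrow> nat \<Rightarrow> nat. \<lambda>x y.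
     if x = a \<and> y = t then (if imp x y = t then a else t) else imp x y)"
  have val: "imp a t = a \<or> imp a t = t" if "imp \<in> ?S" for imp
  proof -
    have "min a (imp a t) = min a t" "imp a t < n"
      using that at unfolding semi_heyting_chain_def is_chain_op_def by auto
    then have "a \<le> imp a t" "imp a t < Suc (Suc a)" using at nt
      by (metis min.absorb_iff1 min.strict_order_iff, simp)
    then show ?thesis using at by linarith
  qed
  have inS: "g imp \<in> ?S" if S: "imp \<in> ?S" for imp
  proof -
    have op: "is_chain_op n imp" and sh2: "\<forall>x y. x < n \<and> y < n \<longrightarrow> min x (imp x y) = min x y"
      and sh3: "\<forall>x y z. x < n \<and> y < n \<and> z < n \<longrightarrow>
         min x (imp y z) = min x (imp (min x y) (min x z))"
      and sh4: "\<forall>x. x < n \<longrightarrow> imp x x = n - 1"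
      using S unfolding semi_heyting_chain_def by auto
    have v: "imp a t = a \<or> imp a t = t" using val S .
    have "is_chain_op n (g imp)"
      using op at unfolding is_chain_op_def g_def by auto
    moreover have "\<forall>x y. x < n \<and> y < n \<longrightarrow> min x (g imp x y) = min x y"
      using sh2 at unfolding g_def by auto
    moreover have "\<forall>x. x < n \<longrightarrow> g imp x x = n - 1"
      using sh4 at unfolding g_def by auto
    moreover have "\<forall>x y z. x < n \<and> y < n \<and> z < n \<longrightarrow>
         min x (g imp y z) = min x (g imp (min x y) (min x z))"
    proof (intro allI impI)
      fix x y z assume xyz: "x < n \<and> y < n \<and> z < n"
      have e: "min x (imp y z) = min x (imp (min x y) (min x z))" using sh3 xyz by blast
      have xx: "imp x x = t" using sh4 xyz t_def by auto
      show "min x (g imp y z) = min x (g imp (min x y) (min x z))"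
      proof (cases "x = t")
        case True
        then have "min x y = y" "min x z = z" using xyz t_def by auto
        then show ?thesis by simp
      next
        case False
        then have xt: "x \<le> a" using xyz at unfolding t_def a_def by auto
        show ?thesis
        proof (cases "y = a \<and> z = t")
          case True
          then have "min x y = x" "min x z = x" using xt at by auto
          then show ?thesis using True xt at v xx unfolding g_def by auto
        next
          case False
          have "\<not> (min x y = a \<and> min x z = t)" using xt at by auto
          then show ?thesis using False e unfolding g_def by auto
        qed
      qed
    qed
    ultimately show ?thesis unfolding semi_heyting_chain_def by auto
  qed
  have "\<forall>imp\<in>?S. g imp \<in> ?S \<and> g imp \<noteq> imp \<and> g (g imp) = imp"
  proof
    fix imp assume S: "imp \<in> ?S"
    have v: "imp a t = a \<or> imp a t = t" using val S .
    have "g imp a t \<noteq> imp a t" using at unfolding g_def by auto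
    hence "g imp \<noteq> imp" by metis
    moreover have "g (g imp) = imp"
      using v at unfolding g_def by (auto intro!: ext)
    ultimately show "g imp \<in> ?S \<and> g imp \<noteq> imp \<and> g (g imp) = imp" using inS S by blast
  qed
  then show ?thesis unfolding N_def
    by (cases "finite ?S") (auto intro: even_card_invol)
qed

end
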